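(* Let $\mathbb{K}$ be a field and let $\mathcal{L}=\{L_1,\ldots,L_d\}$ be a configuration of $d$ mutually distinct lines in $\mathbb{P}^2(\mathbb{K})$, with set of singular points $\{P_1,\ldots,P_s\}$, $s\ge 2$ (points lying on at least two lines of $\mathcal{L}$), where $P_i$ has multiplicity $m_i$ (the number of lines of $\mathcal{L}$ through $P_i$), ordered so that $m_1\ge m_2\ge\cdots\ge m_s$. (a) If $P_1$ and $P_2$ do not lie on a common line of $\mathcal{L}$, then $m_1m_2+2\le s$. (b) If $P_1$ and $P_2$ lie on a common line of $\mathcal{L}$, then $(m_1-1)(m_2-1)+2\le s$. *)

theory Defs
  imports Main
begin

text \<open>The projective plane P^2(K) over a field K: a point is the class of a nonzero
  vector of K^3 under nonzero scalar multiples; a line is the set of points whose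
  representatives satisfy a linear equation a . x = 0 with a nonzero.\<close>

type_synonym 'a vec3 = "'a \<times> 'a \<times> 'a"

definition smul3 :: "'a::field \<Rightarrow> 'a vec3 \<Rightarrow> 'a vec3" where
  "smul3 c v = (c * fst v, c * fst (snd v), c * snd (snd v))"

definition dot3 :: "'a::field vec3 \<Rightarrow> 'a vec3 \<Rightarrow> 'a" where
  "dot3 a v = fst a * fst v + fst (snd a) * fst (snd v) + snd (snd a) * snd (snd v)"

definition proj_pt :: "'a::field vec3 \<Rightarrow> 'a vec3 set" where
  "proj_pt v = {w. \<exists>c. c \<noteq> 0 \<and> w = smul3 c v}"

definition proj_points :: "'a::field vec3 set set" where
  "proj_points = proj_pt ` {v. v \<noteq> (0,0,0)}"

definition proj_line :: "'a::field vec3 \<Rightarrow> 'a vec3 set set" where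
  "proj_line a = {proj_pt v | v. v \<noteq> (0,0,0) \<and> dot3 a v = 0}"

definition proj_lines :: "'a::field vec3 set set set" where
  "proj_lines = proj_line ` {a. a \<noteq> (0,0,0)}"

definition mult :: "'a vec3 set set set \<Rightarrow> 'a vec3 set \<Rightarrow> nat" where
  "mult Ls P = card {L \<in> Ls. P \<in> L}"

definition sing_points :: "'a::field vec3 set set set \<Rightarrow> 'a vec3 set set" where
  "sing_points Ls = {P \<in> proj_points. mult Ls P \<ge> 2}"

end

theory Submission
  imports Defs
begin

definition cross3 :: "'a::field vec3 \<Rightarrow> 'a vec3 \<Rightarrow> 'a vec3" where
  "cross3 v w = (fst (snd v) * snd (snd w) - snd (snd v) * fst (snd w),
                 snd (snd v) * fst w - fst v * snd (snd w),
                 fst v * fst (snd w) - fst (snd v) * fst w)"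

lemma cross_zero_prop:
  fixes v w :: "'a::field vec3"
  assumes "cross3 v w = (0,0,0)" "v \<noteq> (0,0,0)"
  shows "\<exists>c. w = smul3 c v"
proof -
  obtain v1 v2 v3 where v: "v = (v1,v2,v3)" by (cases v) auto
  obtain w1 w2 w3 where w: "w = (w1,w2,w3)" by (cases w) auto
  have e: "v2*w3 = v3*w2" "v3*w1 = v1*w3" "v1*w2 = v2*w1"
    using assms(1) by (auto simp: cross3_def v w)
  show ?thesis
  proof (cases "v1 = 0")
    case False
    show ?thesis
      apply (rule exI[of _ "w1/v1"])
      using False e by (auto simp: smul3_def v w field_simps)
  next
    case z1: True
    show ?thesis
    proof (cases "v2 = 0")
      case False
      show ?thesis
        apply (rule exI[of _ "w2/v2"])
        using False e z1 assms(2) by (auto simp: smul3_def v w field_simps)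
    next
      case z2: True
      then have "v3 \<noteq> 0" using z1 assms(2) v by auto
      then show ?thesis
        apply -
        apply (rule exI[of _ "w3/v3"])
        using e z1 z2 by (auto simp: smul3_def v w field_simps)
    qed
  qed
qed

lemma cross_cross:
  fixes a v w :: "'a::field vec3"
  shows "cross3 a (cross3 v w) = (dot3 a w * fst v - dot3 a v * fst w,
     dot3 a w * fst (snd v) - dot3 a v * fst (snd w),
     dot3 a w * snd (snd v) - dot3 a v * snd (snd w))"
  by (simp add: cross3_def dot3_def algebra_simps)

lemma cross_anti: "cross3 u a = (0,0,0) \<longleftrightarrow> cross3 a (u::'a::field vec3) = (0,0,0)"
  by (auto simp: cross3_def algebra_simps)

lemma dot_cross1: "dot3 a (cross3 a b) = (0::'a::field)"
  by (simp add: cross3_def dot3_def algebra_simps)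
lemma dot_cross2: "dot3 b (cross3 a b) = (0::'a::field)"
  by (simp add: cross3_def dot3_def algebra_simps)

lemma smul_smul: "smul3 d (smul3 c v) = smul3 (d*c) (v::'a::field vec3)"
  by (simp add: smul3_def)

lemma smul_one: "smul3 1 v = (v::'a::field vec3)"
  by (simp add: smul3_def)

lemma smul_zero_iff: "c \<noteq> 0 \<Longrightarrow> smul3 c v = (0,0,0) \<longleftrightarrow> v = ((0,0,0)::'a::field vec3)"
  by (cases v) (auto simp: smul3_def)

lemma proj_pt_smul: "c \<noteq> 0 \<Longrightarrow> proj_pt (smul3 c v) = proj_pt (v::'a::field vec3)"
proof
  assume c: "c \<noteq> 0"
  show "proj_pt (smul3 c v) \<subseteq> proj_pt v"
  proof
    fix x assume "x \<in> proj_pt (smul3 c v)"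
    then obtain d where "d \<noteq> 0" "x = smul3 d (smul3 c v)" by (auto simp: proj_pt_def)
    then have "x = smul3 (d*c) v" by (simp add: smul_smul)
    moreover have "d*c \<noteq> 0" using c \<open>d\<noteq>0\<close> by simp
    ultimately show "x \<in> proj_pt v" unfolding proj_pt_def by blast
  qed
  show "proj_pt v \<subseteq> proj_pt (smul3 c v)"
  proof
    fix x assume "x \<in> proj_pt v"
    then obtain d where "d \<noteq> 0" "x = smul3 d v" by (auto simp: proj_pt_def)
    then have "x = smul3 (d/c) (smul3 c v)" using c by (simp add: smul_smul)
    moreover have "d/c \<noteq> 0" using c \<open>d\<noteq>0\<close> by simp
    ultimately show "x \<in> proj_pt (smul3 c v)" unfolding proj_pt_def by blast
  qed
qed

lemma dot_smul_left: "dot3 (smul3 c a) v = c * dot3 a (v::'a::field vec3)"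
  by (simp add: smul3_def dot3_def algebra_simps)
lemma dot_smul_right: "dot3 a (smul3 c v) = c * dot3 a (v::'a::field vec3)"
  by (simp add: smul3_def dot3_def algebra_simps)

lemma proj_line_smul: "c \<noteq> 0 \<Longrightarrow> proj_line (smul3 c a) = proj_line (a::'a::field vec3)"
  by (simp add: proj_line_def dot_smul_left)

lemma on_line_dot:
  assumes "proj_pt v \<in> proj_line a"
  shows "dot3 a (v::'a::field vec3) = 0"
proof -
  obtain w where w: "proj_pt v = proj_pt w" "w \<noteq> (0,0,0)" "dot3 a w = 0"
    using assms by (auto simp: proj_line_def)
  have "v \<in> proj_pt v" unfolding proj_pt_def using smul_one[of v]
    by (metis (mono_tags, lifting) mem_Collect_eq one_neq_zero)
  then obtain c where "v = smul3 c w" using w by (auto simp: proj_pt_def)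
  then show ?thesis using w by (simp add: dot_smul_right)
qed

lemma lines_meet:
  assumes "L \<in> proj_lines" "M \<in> (proj_lines :: 'a::field vec3 set set set)"
  shows "\<exists>P\<in>proj_points. P \<in> L \<and> P \<in> M"
proof -
  obtain a where a: "a \<noteq> (0,0,0)" "L = proj_line a" using assms by (auto simp: proj_lines_def)
  obtain b where b: "b \<noteq> (0,0,0)" "M = proj_line b" using assms by (auto simp: proj_lines_def)
  show ?thesis
  proof (cases "cross3 a b = (0,0,0)")
    case True
    then obtain c where c: "b = smul3 c a" using cross_zero_prop a by blast
    then have "c \<noteq> 0" using b by (auto simp: smul3_def)
    then have LM: "L = M" using a b c proj_line_smul by metis
    obtain u :: "'a vec3" where u: "u \<noteq> (0,0,0)" "dot3 a u = 0"
    proof (cases "fst a = 0")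
      case True
      then show ?thesis using that[of "(1,0,0)"] by (auto simp: dot3_def)
    next
      case False
      then show ?thesis using that[of "(- fst (snd a), fst a, 0)"] by (auto simp: dot3_def algebra_simps)
    qed
    have "proj_pt u \<in> L" unfolding a(2) proj_line_def using u by blast
    moreover have "proj_pt u \<in> proj_points" using u by (auto simp: proj_points_def)
    ultimately show ?thesis using LM by blast
  next
    case False
    have "proj_pt (cross3 a b) \<in> L" unfolding a(2) proj_line_def using False dot_cross1[of a b] by blast
    moreover have "proj_pt (cross3 a b) \<in> M" unfolding b(2) proj_line_def using False dot_cross2[of b a] by blast
    moreover have "proj_pt (cross3 a b) \<in> proj_points" using False by (auto simp: proj_points_def)
    ultimately show ?thesis by blast
  qed
qed

lemma two_lines_one_point:
  assumes "L \<in> proj_lines" "M \<in> (proj_lines :: 'a::field vec3 set set set)" "L \<noteq> M"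
    and "P \<in> L" "P \<in> M" "Q \<in> L" "Q \<in> M"
  shows "P = Q"
proof (rule ccontr)
  assume PQ: "P \<noteq> Q"
  obtain a where a: "a \<noteq> (0,0,0)" "L = proj_line a" using assms by (auto simp: proj_lines_def)
  obtain b where b: "b \<noteq> (0,0,0)" "M = proj_line b" using assms by (auto simp: proj_lines_def)
  obtain v where v: "v \<noteq> (0,0,0)" "P = proj_pt v" using assms(4) a unfolding proj_line_def by blast
  obtain w where w: "w \<noteq> (0,0,0)" "Q = proj_pt w" using assms(6) a unfolding proj_line_def by blast
  have d: "dot3 a v = 0" "dot3 a w = 0" "dot3 b v = 0" "dot3 b w = 0"
    using on_line_dot assms a b v w by metis+
  define u where "u = cross3 v w"
  have u: "u \<noteq> (0,0,0)"
  proof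
    assume "u = (0,0,0)"
    then have "cross3 v w = (0,0,0)" using u_def by simp
    then obtain c where c: "w = smul3 c v" using cross_zero_prop[OF _ v(1)] by blast
    then have "c \<noteq> 0" using w by (auto simp: smul3_def)
    then have "P = Q" using c v w proj_pt_smul by metis
    then show False using PQ by simp
  qed
  have "cross3 a u = (0,0,0)" "cross3 b u = (0,0,0)"
    using d by (simp_all add: u_def cross_cross)
  then obtain c d where c: "a = smul3 c u" and dd: "b = smul3 d u"
    using cross_zero_prop u cross_anti by metis
  have "c \<noteq> 0" "d \<noteq> 0" using a b c dd by (auto simp: smul3_def)
  then have "L = proj_line u" "M = proj_line u" using a b c dd proj_line_smul by metis+
  then show False using assms by simp
qed

lemma main_count:
  fixes Ls :: "('a::field) vec3 set set set"
  assumes fin: "finite Ls" and sub: "Ls \<subseteq> proj_lines"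
    and fs: "finite (sing_points Ls)"
    and P1: "P1 \<in> sing_points Ls" and P2: "P2 \<in> sing_points Ls"
    and SA: "SA \<subseteq> {L\<in>Ls. P1 \<in> L \<and> P2 \<notin> L}"
    and SB: "SB \<subseteq> {L\<in>Ls. P2 \<in> L \<and> P1 \<notin> L}"
    and ne: "P1 \<noteq> P2"
  shows "card SA * card SB + 2 \<le> card (sing_points Ls)"
proof -
  define f :: "'a vec3 set set \<times> 'a vec3 set set \<Rightarrow> 'a vec3 set" where "f = (\<lambda>(A,B). SOME P. P \<in> proj_points \<and> P \<in> A \<and> P \<in> B)"
  have fp: "f (A,B) \<in> proj_points \<and> f (A,B) \<in> A \<and> f (A,B) \<in> B" if "A \<in> Ls" "B \<in> Ls" for A B
  proof -
    have "\<exists>P. P \<in> proj_points \<and> P \<in> A \<and> P \<in> B" using lines_meet sub that by blast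
    then show ?thesis unfolding f_def case_prod_conv by (rule someI_ex)
  qed
  have inj: "inj_on f (SA \<times> SB)"
  proof (rule inj_onI)
    fix x y assume x: "x \<in> SA \<times> SB" and y: "y \<in> SA \<times> SB" and e: "f x = f y"
    obtain A B where AB: "x = (A,B)" by (cases x)
    obtain A' B' where AB': "y = (A',B')" by (cases y)
    have m: "A \<in> Ls" "B \<in> Ls" "A' \<in> Ls" "B' \<in> Ls" "P1 \<in> A" "P1 \<in> A'" "P2 \<in> B" "P2 \<in> B'"
      "P1 \<notin> B" "P2 \<notin> A"
      using x y AB AB' SA SB by auto
    define Q where "Q = f (A,B)"
    have Q: "Q \<in> A" "Q \<in> B" "Q \<in> A'" "Q \<in> B'"
      using fp[of A B] fp[of A' B'] m e AB AB' Q_def by auto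
    have "A = A'"
    proof (rule ccontr)
      assume "A \<noteq> A'"
      then have "Q = P1" using two_lines_one_point[of A A' Q P1] m Q sub by auto
      then show False using Q m by simp
    qed
    moreover have "B = B'"
    proof (rule ccontr)
      assume "B \<noteq> B'"
      then have "Q = P2" using two_lines_one_point[of B B' Q P2] m Q sub by auto
      then show False using Q m by simp
    qed
    ultimately show "x = y" using AB AB' by simp
  qed
  have img: "f ` (SA \<times> SB) \<subseteq> sing_points Ls - {P1, P2}"
  proof
    fix z assume "z \<in> f ` (SA \<times> SB)"
    then obtain A B where AB: "A \<in> SA" "B \<in> SB" "z = f (A,B)" by auto
    have m: "A \<in> Ls" "B \<in> Ls" "P1 \<in> A" "P2 \<in> B" "P1 \<notin> B" "P2 \<notin> A"
      using AB SA SB by auto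
    have z: "z \<in> proj_points" "z \<in> A" "z \<in> B" using fp[of A B] m AB by auto
    have "A \<noteq> B" using m by auto
    then have "card {A,B} \<le> card {L\<in>Ls. z \<in> L}"
      by (intro card_mono) (use fin z m in auto)
    then have "mult Ls z \<ge> 2" using \<open>A\<noteq>B\<close> by (simp add: mult_def)
    then show "z \<in> sing_points Ls - {P1, P2}"
      using z m by (auto simp: sing_points_def)
  qed
  have "card SA * card SB = card (f ` (SA \<times> SB))"
    using inj by (simp add: card_image card_cartesian_product)
  also have "\<dots> \<le> card (sing_points Ls - {P1, P2})"
    using img fs by (intro card_mono) auto
  also have "\<dots> = card (sing_points Ls) - 2"
    using fs P1 P2 ne by (simp add: card_Diff_subset)
  finally have le: "card SA * card SB \<le> card (sing_points Ls) - 2" .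
  have "card {P1,P2} \<le> card (sing_points Ls)"
    using P1 P2 fs by (intro card_mono) auto
  then have "2 \<le> card (sing_points Ls)" using ne by simp
  then show ?thesis using le by linarith
qed

theorem lemma3:
  fixes Ls :: "('a::field) vec3 set set set" and P1 P2 :: "'a vec3 set"
  assumes "finite Ls" and "Ls \<subseteq> proj_lines"
    and "card (sing_points Ls) \<ge> 2"
    and "P1 \<in> sing_points Ls" and "P2 \<in> sing_points Ls" and "P1 \<noteq> P2"
    and "\<forall>Q\<in>sing_points Ls. mult Ls Q \<le> mult Ls P1"
    and "\<forall>Q\<in>sing_points Ls - {P1}. mult Ls Q \<le> mult Ls P2"
  shows "(\<not> (\<exists>L\<in>Ls. P1 \<in> L \<and> P2 \<in> L) \<longrightarrow>
            mult Ls P1 * mult Ls P2 + 2 \<le> card (sing_points Ls))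
       \<and> ((\<exists>L\<in>Ls. P1 \<in> L \<and> P2 \<in> L) \<longrightarrow>
            (mult Ls P1 - 1) * (mult Ls P2 - 1) + 2 \<le> card (sing_points Ls))"
proof -
  have fs: "finite (sing_points Ls)" using assms(3) card.infinite by fastforce
  show ?thesis
  proof (intro conjI impI)
    assume n: "\<not> (\<exists>L\<in>Ls. P1 \<in> L \<and> P2 \<in> L)"
    show "mult Ls P1 * mult Ls P2 + 2 \<le> card (sing_points Ls)"
      unfolding mult_def
      by (rule main_count[OF assms(1,2) fs assms(4,5) _ _ assms(6)]) (use n in auto)
  next
    assume "\<exists>L\<in>Ls. P1 \<in> L \<and> P2 \<in> L"
    then obtain L0 where L0: "L0 \<in> Ls" "P1 \<in> L0" "P2 \<in> L0" by auto
    have u: "L = L0" if "L \<in> Ls" "P1 \<in> L" "P2 \<in> L" for L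
      using two_lines_one_point[of L L0 P1 P2] that L0 assms(2,6) by blast
    have c1: "card ({L\<in>Ls. P1 \<in> L} - {L0}) = mult Ls P1 - 1"
      using L0 assms(1) by (simp add: mult_def card_Diff_singleton)
    have c2: "card ({L\<in>Ls. P2 \<in> L} - {L0}) = mult Ls P2 - 1"
      using L0 assms(1) by (simp add: mult_def card_Diff_singleton)
    have "card ({L\<in>Ls. P1 \<in> L} - {L0}) * card ({L\<in>Ls. P2 \<in> L} - {L0}) + 2 \<le> card (sing_points Ls)"
      by (rule main_count[OF assms(1,2) fs assms(4,5) _ _ assms(6)]) (use u in auto)
    then show "(mult Ls P1 - 1) * (mult Ls P2 - 1) + 2 \<le> card (sing_points Ls)"
      using c1 c2 by simp
  qed
qed

end
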